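(* Let $G=(V,E)$ be a connected, locally finite, undirected graph and $s:V\to\mathbb{R}$ with odometer $u_\infty$. The following are equivalent: (1) there exists a legal stabilizing toppling procedure for $s$; (2) there exists a stabilizing toppling procedure for $s$; (3) $\mathcal{F}_s\neq\emptyset$; (4) $u_\infty(x)<\infty$ for all $x\in V$; (5) every legal toppling procedure for $s$ is finite; (6) the parallel toppling procedure for $s$ is finite.
   Context: $\Delta u(x)=\sum_{y\sim x}(u(y)-u(x))$; $\mathcal{F}_s=\{f:V\to\mathbb{R}: f\ge0,\ s+\Delta f\le1\}$; odometer $u_\infty(x)=\inf\{f(x):f\in\mathcal{F}_s\}$ ($\inf\emptyset=\infty$). A toppling procedure: a well-ordered closed set $T\subset[0,\infty)$ with $0\in T$ and $(t,x)\mapsto u_t(x)\in[0,\infty)$ with $u_0=0$, $u_t(x)$ nondecreasing in $t$, and $t_n\uparrow t\Rightarrow u_{t_n}(x)\uparrow u_t(x)$. With $s_t=s+\Delta u_t$, $t^-=\sup\{r\in T:r<t\}$: legal for $s$ if $u_t(x)-u_{t^-}(x)\le (s_{t^-}(x)-1)^+/\deg(x)$ for all $x$, $t\in T\setminus\{0\}$; finite if $u_\infty(x)=\lim_{t\to\sup T}u_t(x)<\infty$ for all $x$; stabilizing if finite and $s+\Delta u_\infty\le1$. The parallel toppling procedure has $T=\mathbb{N}$ and $u_t(x)-u_{t-1}(x)=(s_{t-1}(x)-1)^+/\deg(x)$ for all $x$, $t\ge1$. *)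

theory Defs
  imports "HOL-Analysis.Analysis"
begin

text \<open>Graph: vertex set = the type 'a, adjacency relation E (symmetric, irreflexive).\<close>

definition nbrs :: "('a \<Rightarrow> 'a \<Rightarrow> bool) \<Rightarrow> 'a \<Rightarrow> 'a set" where
  "nbrs E x = {y. E x y}"

definition deg :: "('a \<Rightarrow> 'a \<Rightarrow> bool) \<Rightarrow> 'a \<Rightarrow> real" where
  "deg E x = real (card (nbrs E x))"

definition Lap :: "('a \<Rightarrow> 'a \<Rightarrow> bool) \<Rightarrow> ('a \<Rightarrow> real) \<Rightarrow> 'a \<Rightarrow> real" where
  "Lap E u x = (\<Sum>y\<in>nbrs E x. u y - u x)"

definition Fs :: "('a \<Rightarrow> 'a \<Rightarrow> bool) \<Rightarrow> ('a \<Rightarrow> real) \<Rightarrow> ('a \<Rightarrow> real) set" where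
  "Fs E s = {f. (\<forall>x. f x \<ge> 0) \<and> (\<forall>x. s x + Lap E f x \<le> 1)}"

text \<open>Odometer, with values in the extended reals (Inf of the empty set is \<infinity>).\<close>
definition odometer :: "('a \<Rightarrow> 'a \<Rightarrow> bool) \<Rightarrow> ('a \<Rightarrow> real) \<Rightarrow> 'a \<Rightarrow> ereal" where
  "odometer E s x = (INF f\<in>Fs E s. ereal (f x))"

definition well_ordered_set :: "real set \<Rightarrow> bool" where
  "well_ordered_set T \<longleftrightarrow> (\<forall>S. S \<subseteq> T \<and> S \<noteq> {} \<longrightarrow> (\<exists>m\<in>S. \<forall>y\<in>S. m \<le> y))"

definition toppling_proc :: "real set \<Rightarrow> (real \<Rightarrow> 'a \<Rightarrow> real) \<Rightarrow> bool" where
  "toppling_proc T u \<longleftrightarrow>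
     T \<subseteq> {0..} \<and> closed T \<and> 0 \<in> T \<and> well_ordered_set T \<and>
     (\<forall>x. u 0 x = 0) \<and>
     (\<forall>t\<in>T. \<forall>x. u t x \<ge> 0) \<and>
     (\<forall>x. \<forall>t\<in>T. \<forall>t'\<in>T. t \<le> t' \<longrightarrow> u t x \<le> u t' x) \<and>
     (\<forall>x t tn. t \<in> T \<longrightarrow> range tn \<subseteq> T \<longrightarrow> incseq tn \<longrightarrow> tn \<longlonglongrightarrow> t
        \<longrightarrow> (\<lambda>n. u (tn n) x) \<longlonglongrightarrow> u t x)"

definition tminus :: "real set \<Rightarrow> real \<Rightarrow> real" where
  "tminus T t = Sup {r\<in>T. r < t}"

definition legal :: "('a \<Rightarrow> 'a \<Rightarrow> bool) \<Rightarrow> ('a \<Rightarrow> real) \<Rightarrow> real set \<Rightarrow> (real \<Rightarrow> 'a \<Rightarrow> real) \<Rightarrow> bool" where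
  "legal E s T u \<longleftrightarrow>
     (\<forall>t\<in>T - {0}. \<forall>x. u t x - u (tminus T t) x
        \<le> max 0 (s x + Lap E (u (tminus T t)) x - 1) / deg E x)"

text \<open>Finite: the (monotone) limit u_\<infinity>(x) = lim_{t \<rightarrow> sup T} u_t(x) = sup_{t\<in>T} u_t(x) is finite.\<close>
definition finite_proc :: "real set \<Rightarrow> (real \<Rightarrow> 'a \<Rightarrow> real) \<Rightarrow> bool" where
  "finite_proc T u \<longleftrightarrow> (\<forall>x. bdd_above ((\<lambda>t. u t x) ` T))"

definition u_lim :: "real set \<Rightarrow> (real \<Rightarrow> 'a \<Rightarrow> real) \<Rightarrow> 'a \<Rightarrow> real" where
  "u_lim T u x = (SUP t\<in>T. u t x)"

definition stabilizing :: "('a \<Rightarrow> 'a \<Rightarrow> bool) \<Rightarrow> ('a \<Rightarrow> real) \<Rightarrow> real set \<Rightarrow> (real \<Rightarrow> 'a \<Rightarrow> real) \<Rightarrow> bool" where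
  "stabilizing E s T u \<longleftrightarrow> finite_proc T u \<and> (\<forall>x. s x + Lap E (u_lim T u) x \<le> 1)"

primrec par_top :: "('a \<Rightarrow> 'a \<Rightarrow> bool) \<Rightarrow> ('a \<Rightarrow> real) \<Rightarrow> nat \<Rightarrow> 'a \<Rightarrow> real" where
  "par_top E s 0 x = 0"
| "par_top E s (Suc n) x = par_top E s n x + max 0 (s x + Lap E (par_top E s n) x - 1) / deg E x"

definition parallel_proc :: "('a \<Rightarrow> 'a \<Rightarrow> bool) \<Rightarrow> ('a \<Rightarrow> real) \<Rightarrow> real \<Rightarrow> 'a \<Rightarrow> real" where
  "parallel_proc E s t x = par_top E s (nat \<lfloor>t\<rfloor>) x"

end

theory Submission
  imports Defs "HOL-Real_Asymp.Real_Asymp"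
begin

lemma deg_pos:
  assumes locfin: "\<And>x. finite (nbrs E x)"
    and conn: "\<And>x y. E\<^sup>*\<^sup>* x y"
    and edge: "\<exists>x y. E x y"
  shows "deg E x > 0"
proof -
  obtain a b where ab: "E a b" using edge by blast
  have "\<exists>y. E x y"
  proof (cases "x = a")
    case True thus ?thesis using ab by blast
  next
    case False
    from conn[of x a] False show ?thesis by (auto elim: converse_rtranclpE)
  qed
  then obtain y where "y \<in> nbrs E x" by (auto simp: nbrs_def)
  hence "nbrs E x \<noteq> {}" by auto
  thus ?thesis using locfin[of x] by (simp add: deg_def card_gt_0_iff)
qed

lemma Lap_expand: "Lap E u x = (\<Sum>y\<in>nbrs E x. u y) - deg E x * u x"
  by (simp add: Lap_def sum_subtractf deg_def)

lemma step_bound: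
  assumes d: "deg E x > 0" and gf: "\<And>y. g y \<le> f y" and f: "f \<in> Fs E s"
    and v: "v - g x \<le> max 0 (s x + Lap E g x - 1) / deg E x"
  shows "v \<le> f x"
proof (cases "s x + Lap E g x - 1 \<le> 0")
  case True
  then have "v \<le> g x" using v by simp
  thus ?thesis using gf[of x] by simp
next
  case False
  define d where "d = deg E x"
  have "v - g x \<le> (s x + Lap E g x - 1) / d" using v False by (simp add: d_def)
  hence "(v - g x) * d \<le> s x + Lap E g x - 1" using d by (simp add: d_def pos_le_divide_eq)
  hence 1: "d * v \<le> s x + (\<Sum>y\<in>nbrs E x. g y) - 1"
    by (simp add: Lap_expand d_def algebra_simps)
  have 2: "(\<Sum>y\<in>nbrs E x. g y) \<le> (\<Sum>y\<in>nbrs E x. f y)" by (rule sum_mono) (rule gf)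
  have "s x + Lap E f x \<le> 1" using f by (simp add: Fs_def)
  hence 3: "s x + (\<Sum>y\<in>nbrs E x. f y) - 1 \<le> d * f x" by (simp add: Lap_expand d_def)
  have "d * v \<le> d * f x" using 1 2 3 by linarith
  thus ?thesis using d by (simp add: d_def)
qed

lemma least_action:
  assumes dpos: "\<And>x. deg E x > 0" and tp: "toppling_proc T u" and lg: "legal E s T u"
    and f: "f \<in> Fs E s"
  shows "\<forall>t\<in>T. \<forall>x. u t x \<le> f x"
proof (rule ccontr)
  assume "\<not> ?thesis"
  then have ne: "{t\<in>T. \<exists>x. u t x > f x} \<noteq> {}" by (auto simp: not_le)
  have wo: "well_ordered_set T" and Tcl: "closed T" and T0: "0 \<in> T" and Tpos: "T \<subseteq> {0..}"
    and u0: "\<And>x. u 0 x = 0"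
    and cont: "\<And>x t tn. t \<in> T \<Longrightarrow> range tn \<subseteq> T \<Longrightarrow> incseq tn \<Longrightarrow> tn \<longlonglongrightarrow> t
        \<Longrightarrow> (\<lambda>n. u (tn n) x) \<longlonglongrightarrow> u t x"
    using tp unfolding toppling_proc_def by blast+
  have fnn: "\<And>x. f x \<ge> 0" using f by (simp add: Fs_def)
  have "\<exists>m\<in>{t\<in>T. \<exists>x. u t x > f x}. \<forall>y\<in>{t\<in>T. \<exists>x. u t x > f x}. m \<le> y"
    using wo ne unfolding well_ordered_set_def by (simp only: Collect_subset simp_thms)
  then obtain m where mS: "m \<in> {t\<in>T. \<exists>x. u t x > f x}" and mmin: "\<And>y. y \<in> {t\<in>T. \<exists>x. u t x > f x} \<Longrightarrow> m \<le> y"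
    by blast
  have mT: "m \<in> T" using mS by blast
  obtain x0 where x0: "u m x0 > f x0" using mS by blast
  have IH: "\<And>r x. r \<in> T \<Longrightarrow> r < m \<Longrightarrow> u r x \<le> f x"
  proof (rule ccontr)
    fix r x assume "r \<in> T" "r < m" "\<not> u r x \<le> f x"
    hence "r \<in> {t\<in>T. \<exists>x. u t x > f x}" by (auto simp: not_le)
    hence "m \<le> r" by (rule mmin)
    thus False using \<open>r < m\<close> by simp
  qed
  have "m \<noteq> 0"
  proof
    assume "m = 0" thus False using x0 u0[of x0] fnn[of x0] by simp
  qed
  moreover have "m \<ge> 0" using Tpos mT by auto
  ultimately have m0: "m > 0" by simp
  define S where "S = {r\<in>T. r < m}"
  have Sne: "S \<noteq> {}" using T0 m0 by (auto simp: S_def)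
  have Sbdd: "bdd_above S" by (auto simp: S_def bdd_above_def intro!: exI[of _ m])
  have tm: "tminus T m = Sup S" by (simp add: tminus_def S_def)
  have tmle: "Sup S \<le> m" by (rule cSup_least[OF Sne]) (auto simp: S_def)
  have "closure S \<subseteq> T" using Tcl by (intro closure_minimal) (auto simp: S_def)
  hence tmT: "Sup S \<in> T" using closure_contains_Sup[OF Sne Sbdd] by blast
  show False
  proof (cases "Sup S < m")
    case True
    have IHm: "\<And>y. u (Sup S) y \<le> f y" using IH tmT True by blast
    have "u m x0 - u (Sup S) x0 \<le> max 0 (s x0 + Lap E (u (Sup S)) x0 - 1) / deg E x0"
      using lg mT \<open>m \<noteq> 0\<close> unfolding legal_def tm[symmetric] by blast
    hence "u m x0 \<le> f x0" by (rule step_bound[OF dpos IHm f])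
    thus False using x0 by simp
  next
    case False
    hence Seq: "Sup S = m" using tmle by simp
    have "\<forall>n. \<exists>r\<in>S. m - 1 / (real n + 1) < r"
    proof
      fix n :: nat
      have "m - 1 / (real n + 1) < Sup S" using Seq by simp
      thus "\<exists>r\<in>S. m - 1 / (real n + 1) < r" using less_cSupD[OF Sne] by blast
    qed
    then obtain r where r: "\<And>n. r n \<in> S" "\<And>n. m - 1 / (real n + 1) < r n" by metis
    define tn where "tn n = Max (r ` {..n})" for n
    have tnS: "tn n \<in> S" for n
    proof -
      have "tn n \<in> r ` {..n}" unfolding tn_def by (intro Max_in) auto
      thus ?thesis using r(1) by (auto simp: image_iff)
    qed
    have tnge: "r n \<le> tn n" for n unfolding tn_def by (intro Max_ge) auto
    have tninc: "incseq tn" unfolding incseq_def tn_def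
      by (intro allI impI Max_mono) auto
    have tnT: "range tn \<subseteq> T" using tnS by (auto simp: S_def)
    have tnlt: "tn n < m" for n using tnS[of n] by (simp add: S_def)
    have lim1: "(\<lambda>n. m - 1 / (real n + 1)) \<longlonglongrightarrow> m"
      by real_asymp
    have "tn \<longlonglongrightarrow> m"
    proof (rule tendsto_sandwich[OF _ _ lim1 tendsto_const])
      show "\<forall>\<^sub>F n in sequentially. m - 1 / (real n + 1) \<le> tn n"
      proof (intro always_eventually allI)
        fix n show "m - 1 / (real n + 1) \<le> tn n" using r(2)[of n] tnge[of n] by linarith
      qed
      show "\<forall>\<^sub>F n in sequentially. tn n \<le> m"
        using tnlt by (intro always_eventually allI less_imp_le)
    qed
    hence lim: "(\<lambda>n. u (tn n) x0) \<longlonglongrightarrow> u m x0" by (rule cont[OF mT tnT tninc])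
    have bd: "\<And>n. u (tn n) x0 \<le> f x0" using IH tnT tnlt by blast
    have "u m x0 \<le> f x0" by (rule LIMSEQ_le_const2[OF lim]) (use bd in blast)
    thus False using x0 by simp
  qed
qed


lemma par_inc_nonneg: "max 0 (s x + Lap E (par_top E s n) x - 1) / deg E x \<ge> 0"
  by (simp add: deg_def)

lemma par_incseq: "incseq (\<lambda>n. par_top E s n x)"
  by (rule incseq_SucI) (simp add: deg_def)

lemma par_nonneg: "par_top E s n x \<ge> 0"
proof -
  have "par_top E s 0 x \<le> par_top E s n x" using par_incseq[of E s x] unfolding incseq_def by blast
  thus ?thesis by simp
qed

lemma par_real: "parallel_proc E s (real n) = par_top E s n"
  by (simp add: parallel_proc_def fun_eq_iff)

lemma Nats_eq_lemma: "a \<in> \<nat> \<Longrightarrow> b \<in> \<nat> \<Longrightarrow> \<bar>a - b\<bar> < 1 \<Longrightarrow> a = (b::real)"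
proof -
  assume "a \<in> \<nat>" "b \<in> \<nat>" "\<bar>a - b\<bar> < 1"
  then obtain i j where ij: "a = real i" "b = real j" by (auto elim!: Nats_cases)
  with \<open>\<bar>a - b\<bar> < 1\<close> have "i = j" by linarith
  thus ?thesis using ij by simp
qed

lemma par_tp: "toppling_proc \<nat> (parallel_proc E s)"
  unfolding toppling_proc_def
proof (intro conjI allI ballI impI)
  show "\<nat> \<subseteq> {0::real..}" by (auto elim!: Nats_cases)
  show "closed (\<nat>::real set)" by simp
  show "(0::real) \<in> \<nat>" by simp
  show "well_ordered_set \<nat>" unfolding well_ordered_set_def
  proof (intro allI impI)
    fix S :: "real set" assume S: "S \<subseteq> \<nat> \<and> S \<noteq> {}"
    define N where "N = {n. real n \<in> S}"
    obtain a where "a \<in> S" using S by blast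
    then obtain k where "a = real k" using S by (auto elim!: Nats_cases)
    hence "k \<in> N" using \<open>a \<in> S\<close> by (simp add: N_def)
    hence LN: "(LEAST n. n \<in> N) \<in> N" by (rule LeastI)
    show "\<exists>m\<in>S. \<forall>y\<in>S. m \<le> y"
    proof (intro bexI ballI)
      show "real (LEAST n. n \<in> N) \<in> S" using LN by (simp add: N_def)
      fix y assume "y \<in> S"
      then obtain j where "y = real j" using S by (auto elim!: Nats_cases)
      hence "j \<in> N" using \<open>y \<in> S\<close> by (simp add: N_def)
      hence "(LEAST n. n \<in> N) \<le> j" by (rule Least_le)
      thus "real (LEAST n. n \<in> N) \<le> y" using \<open>y = real j\<close> by simp
    qed
  qed
  fix x
  show "parallel_proc E s 0 x = 0" by (simp add: parallel_proc_def)
  { fix t :: real assume "t \<in> \<nat>"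
    then obtain n where "t = real n" by (auto elim!: Nats_cases)
    thus "parallel_proc E s t x \<ge> 0" by (simp add: par_real par_nonneg) }
  { fix t t' :: real assume "t \<in> \<nat>" "t' \<in> \<nat>" "t \<le> t'"
    then obtain n n' where nn: "t = real n" "t' = real n'" by (auto elim!: Nats_cases)
    with \<open>t \<le> t'\<close> have "n \<le> n'" by simp
    thus "parallel_proc E s t x \<le> parallel_proc E s t' x"
      using par_incseq[of E s x] nn by (simp add: par_real incseq_def) }
  { fix t :: real and tn :: "nat \<Rightarrow> real"
    assume a1: "t \<in> \<nat>" and a2: "range tn \<subseteq> \<nat>" and a3: "incseq tn" and a4: "tn \<longlonglongrightarrow> t"
    note a = a1 a2 a3 a4
    then have "eventually (\<lambda>n. dist (tn n) t < 1) sequentially"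
      by (intro tendstoD) auto
    hence "eventually (\<lambda>n. tn n = t) sequentially"
    proof (rule eventually_mono)
      fix n assume "dist (tn n) t < 1"
      thus "tn n = t" using a by (intro Nats_eq_lemma) (auto simp: dist_real_def)
    qed
    hence "eventually (\<lambda>n. parallel_proc E s (tn n) x = parallel_proc E s t x) sequentially"
      by (rule eventually_mono) simp
    thus "(\<lambda>n. parallel_proc E s (tn n) x) \<longlonglongrightarrow> parallel_proc E s t x"
      by (rule tendsto_eventually) }
qed

lemma par_legal: "legal E s \<nat> (parallel_proc E s)"
  unfolding legal_def
proof (intro allI ballI)
  fix t :: real and x assume t: "t \<in> \<nat> - {0}"
  then obtain k where k: "t = real k" by (auto elim!: Nats_cases)
  with t have "k \<noteq> 0" by auto
  then obtain m where km: "k = Suc m" by (cases k) auto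
  have "tminus \<nat> t = real m" unfolding tminus_def
  proof (rule cSup_eq_maximum)
    show "real m \<in> {r \<in> \<nat>. r < t}" using k km by simp
    fix r assume "r \<in> {r \<in> \<nat>. r < t}"
    then obtain j where "r = real j" "real j < t" by (auto elim!: Nats_cases)
    thus "r \<le> real m" using k km by simp
  qed
  moreover have "parallel_proc E s t = par_top E s (Suc m)" using k km par_real by metis
  ultimately show "parallel_proc E s t x - parallel_proc E s (tminus \<nat> t) x
         \<le> max 0 (s x + Lap E (parallel_proc E s (tminus \<nat> t)) x - 1) / deg E x"
    by (simp add: par_real)
qed


lemma par_image: "(\<lambda>t. parallel_proc E s t x) ` \<nat> = range (\<lambda>n. par_top E s n x)"
  by (auto simp: Nats_def image_image par_real)

lemma par_stab:
  assumes dpos: "\<And>x. deg E x > 0" and locfin: "\<And>x. finite (nbrs E x)"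
    and fin: "finite_proc \<nat> (parallel_proc E s)"
  shows "stabilizing E s \<nat> (parallel_proc E s)"
  unfolding stabilizing_def
proof (intro conjI allI fin)
  fix x
  define L where "L = u_lim \<nat> (parallel_proc E s)"
  have conv: "(\<lambda>n. par_top E s n y) \<longlonglongrightarrow> L y" for y
  proof -
    have bdd: "bdd_above (range (\<lambda>n. par_top E s n y))"
      using fin unfolding finite_proc_def par_image by auto
    have "L y = (SUP n. par_top E s n y)" unfolding L_def u_lim_def par_image ..
    thus ?thesis using LIMSEQ_incseq_SUP[OF bdd par_incseq] by simp
  qed
  have lapc: "(\<lambda>n. Lap E (par_top E s n) x) \<longlonglongrightarrow> Lap E L x"
    unfolding Lap_def by (intro tendsto_intros conv)
  have "(\<lambda>n. par_top E s (Suc n) x - par_top E s n x) \<longlonglongrightarrow> L x - L x"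
    by (intro tendsto_intros conv[THEN LIMSEQ_Suc] conv)
  hence l1: "(\<lambda>n. max 0 (s x + Lap E (par_top E s n) x - 1) / deg E x) \<longlonglongrightarrow> 0" by simp
  have l2: "(\<lambda>n. max 0 (s x + Lap E (par_top E s n) x - 1) / deg E x) \<longlonglongrightarrow>
      max 0 (s x + Lap E L x - 1) / deg E x"
    by (intro tendsto_intros lapc) (use dpos[of x] in simp)
  have "max 0 (s x + Lap E L x - 1) / deg E x = 0" using LIMSEQ_unique[OF l2 l1] .
  hence "max 0 (s x + Lap E L x - 1) = 0" using dpos[of x] by simp
  thus "s x + Lap E L x \<le> 1" by simp
qed

theorem corollary2p11:
  fixes E :: "'a \<Rightarrow> 'a \<Rightarrow> bool" and s :: "'a \<Rightarrow> real"
  assumes sym: "symp E"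
    and irrefl: "\<And>x. \<not> E x x"
    and locfin: "\<And>x. finite (nbrs E x)"
    and conn: "\<And>x y. E\<^sup>*\<^sup>* x y"
    and edge: "\<exists>x y. E x y"
  shows "((\<exists>T u. toppling_proc T u \<and> legal E s T u \<and> stabilizing E s T u)
           \<longleftrightarrow> (\<exists>T u. toppling_proc T u \<and> stabilizing E s T u))
       \<and> ((\<exists>T u. toppling_proc T u \<and> stabilizing E s T u) \<longleftrightarrow> Fs E s \<noteq> {})
       \<and> (Fs E s \<noteq> {} \<longleftrightarrow> (\<forall>x. odometer E s x < \<infinity>))
       \<and> ((\<forall>x. odometer E s x < \<infinity>)
           \<longleftrightarrow> (\<forall>T u. toppling_proc T u \<and> legal E s T u \<longrightarrow> finite_proc T u))
       \<and> ((\<forall>T u. toppling_proc T u \<and> legal E s T u \<longrightarrow> finite_proc T u)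
           \<longleftrightarrow> finite_proc \<nat> (parallel_proc E s))"
proof -
  have dpos: "\<And>x. deg E x > 0" using deg_pos[OF locfin conn edge] .
  have i12: "(\<exists>T u. toppling_proc T u \<and> legal E s T u \<and> stabilizing E s T u)
           \<Longrightarrow> (\<exists>T u. toppling_proc T u \<and> stabilizing E s T u)" by blast
  have i23: "Fs E s \<noteq> {}" if h2: "\<exists>T u. toppling_proc T u \<and> stabilizing E s T u"
  proof -
    obtain T u where tu: "toppling_proc T u" "stabilizing E s T u" using h2 by blast
    have "u_lim T u \<in> Fs E s" unfolding Fs_def
    proof (intro CollectI conjI allI)
      fix x
      show "s x + Lap E (u_lim T u) x \<le> 1" using tu(2) by (simp add: stabilizing_def)
      have "bdd_above ((\<lambda>t. u t x) ` T)" using tu(2) by (simp add: stabilizing_def finite_proc_def)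
      moreover have "0 \<in> T" "u 0 x = 0" using tu(1) by (auto simp: toppling_proc_def)
      ultimately have "u 0 x \<le> u_lim T u x" unfolding u_lim_def by (intro cSUP_upper)
      thus "u_lim T u x \<ge> 0" using \<open>u 0 x = 0\<close> by simp
    qed
    thus ?thesis by blast
  qed
  have i34: "(Fs E s \<noteq> {}) = (\<forall>x. odometer E s x < \<infinity>)"
  proof
    assume "Fs E s \<noteq> {}"
    then obtain f where f: "f \<in> Fs E s" by blast
    show "\<forall>x. odometer E s x < \<infinity>"
    proof
      fix x
      have "odometer E s x \<le> ereal (f x)" unfolding odometer_def using f by (rule INF_lower)
      moreover have "ereal (f x) < \<infinity>" by simp
      ultimately show "odometer E s x < \<infinity>" by (rule le_less_trans)
    qed
  next
    assume a: "\<forall>x. odometer E s x < \<infinity>"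
    show "Fs E s \<noteq> {}"
    proof
      assume "Fs E s = {}"
      hence "odometer E s undefined = \<infinity>" by (simp add: odometer_def top_ereal_def)
      thus False using a by simp
    qed
  qed
  have i35: "\<forall>T u. toppling_proc T u \<and> legal E s T u \<longrightarrow> finite_proc T u" if h3: "Fs E s \<noteq> {}"
  proof (intro allI impI)
    fix T u assume tu: "toppling_proc T u \<and> legal E s T u"
    obtain f where f: "f \<in> Fs E s" using h3 by blast
    have le: "\<forall>t\<in>T. \<forall>x. u t x \<le> f x" using least_action[OF dpos _ _ f] tu by blast
    show "finite_proc T u" unfolding finite_proc_def
    proof
      fix x show "bdd_above ((\<lambda>t. u t x) ` T)" using le by (auto simp: bdd_above_def)
    qed
  qed
  have i56: "finite_proc \<nat> (parallel_proc E s)"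
    if "\<forall>T u. toppling_proc T u \<and> legal E s T u \<longrightarrow> finite_proc T u"
    using that par_tp par_legal by blast
  have i61: "\<exists>T u. toppling_proc T u \<and> legal E s T u \<and> stabilizing E s T u"
    if "finite_proc \<nat> (parallel_proc E s)"
    using par_tp par_legal par_stab[OF dpos locfin that] by blast
  show ?thesis using i12 i23 i34 i35 i56 i61 by blast
qed

end
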